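(* Let $\mathcal{T}$ be a tree with costs $c:V(\mathcal{T})\to\mathbb{R}_{>0}$, and let $0<a<b$ with $c(v)\le b$ for all $v\in V(\mathcal{T})$, $2a\ge b$, and some vertex having $c(v)\le a$. Let $\mathcal{Z}$ be constructed as described, let $\mathcal{T}'$ be a connected component of $\mathcal{T}-\mathcal{Z}$, let $H$ be the unique heavy module with respect to $a$ contained in $\mathcal{T}'$, and let $D_H$ be the ranking-based decision tree of $\mathcal{T}'\langle H\rangle$. Then $\texttt{COST}_{D_H}(\mathcal{T}'\langle H\rangle,c)\le 2\cdot\texttt{OPT}(\mathcal{T},c)$.
   Context: Search model: a query to $v$ costs $c(v)$ and returns either that $v$ is the target or the component of (tree)$-v$ containing the target. A decision tree for a tree $T$ is (recursively) a rooted tree whose root is a vertex $v$ of $T$ and whose root subtrees are decision trees for the components of $T-v$, one per component; its cost is the maximum over targets $x$ of the total cost of the vertices on the root-to-$x$ path, and $\texttt{OPT}$ is the minimum cost. A heavy module with respect to $a$ is a set $H$ with $\mathcal{T}[H]$ connected, $c(v)>a$ for all $v\in H$, maximal with these properties. $\mathcal{T}\langle S\rangle$ denotes the minimal subtree containing $S$; $\mathcal{P}_{\mathcal{T}}(u,v)$ is the set of vertices strictly between $u$ and $v$ on their path. $\mathcal{X}$ contains one arbitrarily chosen vertex from each heavy module w.r.t. $a$; $\mathcal{Y}=\mathcal{X}\cup\{v\in V(\mathcal{T}\langle\mathcal{X}\rangle):\deg_{\mathcal{T}\langle\mathcal{X}\rangle}(v)\ge3\}$; $\mathcal{Z}$ is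 $\mathcal{Y}$ together with, for each pair $u,v\in\mathcal{Y}$ with $\mathcal{P}_{\mathcal{T}}(u,v)\ne\emptyset$ and $\mathcal{P}_{\mathcal{T}}(u,v)\cap\mathcal{Y}=\emptyset$, a minimum-cost vertex of $\mathcal{P}_{\mathcal{T}}(u,v)$. A vertex ranking of a tree is a labeling $l$ by positive integers such that whenever $u\ne v$ and $l(u)=l(v)$, some vertex $z$ strictly between $u$ and $v$ has $l(z)>l(v)$. The ranking-based decision tree of a tree is obtained from a vertex ranking with the minimum possible number of distinct labels by querying the unique vertex $z$ of largest label as root and attaching, recursively, the decision trees so obtained for the components of (tree)$-z$. *)

theory Defs
  imports Complex_Main
begin

text \<open>Graphs are given by an adjacency relation E on vertices; all trees considered
  are induced subgraphs of the input tree, represented by their vertex sets.\<close>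

definition connected_on :: "('a \<Rightarrow> 'a \<Rightarrow> bool) \<Rightarrow> 'a set \<Rightarrow> bool" where
  "connected_on E S \<longleftrightarrow>
     (\<forall>u\<in>S. \<forall>v\<in>S. (u, v) \<in> {(x, y). x \<in> S \<and> y \<in> S \<and> E x y}\<^sup>*)"

definition edges_on :: "('a \<Rightarrow> 'a \<Rightarrow> bool) \<Rightarrow> 'a set \<Rightarrow> 'a set set" where
  "edges_on E S = {{u, v} | u v. u \<in> S \<and> v \<in> S \<and> E u v}"

definition is_tree :: "('a \<Rightarrow> 'a \<Rightarrow> bool) \<Rightarrow> 'a set \<Rightarrow> bool" where
  "is_tree E V \<longleftrightarrow> finite V \<and> V \<noteq> {} \<and> (\<forall>u v. E u v \<longrightarrow> E v u) \<and> (\<forall>u. \<not> E u u)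
     \<and> connected_on E V \<and> card (edges_on E V) = card V - 1"

text \<open>Connected components of the subgraph induced by S (e.g. components of T - v
  are components E (V - {v})).\<close>
definition components :: "('a \<Rightarrow> 'a \<Rightarrow> bool) \<Rightarrow> 'a set \<Rightarrow> 'a set set" where
  "components E S = {C. C \<subseteq> S \<and> C \<noteq> {} \<and> connected_on E C \<and>
      (\<forall>D. C \<subseteq> D \<and> D \<subseteq> S \<and> connected_on E D \<longrightarrow> D = C)}"

definition steiner :: "('a \<Rightarrow> 'a \<Rightarrow> bool) \<Rightarrow> 'a set \<Rightarrow> 'a set \<Rightarrow> 'a set" where
  "steiner E W S = \<Inter>{U. S \<subseteq> U \<and> U \<subseteq> W \<and> connected_on E U}"

definition path_interior :: "('a \<Rightarrow> 'a \<Rightarrow> bool) \<Rightarrow> 'a set \<Rightarrow> 'a \<Rightarrow> 'a \<Rightarrow> 'a set" where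
  "path_interior E W u v = steiner E W {u, v} - {u, v}"

definition degree_in :: "('a \<Rightarrow> 'a \<Rightarrow> bool) \<Rightarrow> 'a set \<Rightarrow> 'a \<Rightarrow> nat" where
  "degree_in E W v = card {w \<in> W. E v w}"

datatype 'a dtree = DNode 'a "'a dtree list"

inductive is_dtree :: "('a \<Rightarrow> 'a \<Rightarrow> bool) \<Rightarrow> 'a set \<Rightarrow> 'a dtree \<Rightarrow> bool" for E where
  "v \<in> S \<Longrightarrow> distinct Cs \<Longrightarrow> set Cs = components E (S - {v}) \<Longrightarrow>
   list_all2 (is_dtree E) Cs ts \<Longrightarrow> is_dtree E S (DNode v ts)"

fun dpaths :: "'a dtree \<Rightarrow> 'a list set" where
  "dpaths (DNode v ts) = {[v]} \<union> (\<Union>t\<in>set ts. (\<lambda>p. v # p) ` dpaths t)"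

definition dcost :: "('a \<Rightarrow> real) \<Rightarrow> 'a dtree \<Rightarrow> real" where
  "dcost c D = Max ((\<lambda>p. sum_list (map c p)) ` dpaths D)"

definition OPT :: "('a \<Rightarrow> 'a \<Rightarrow> bool) \<Rightarrow> 'a set \<Rightarrow> ('a \<Rightarrow> real) \<Rightarrow> real" where
  "OPT E V c = (INF D \<in> {D. is_dtree E V D}. dcost c D)"

definition heavy_module :: "('a \<Rightarrow> 'a \<Rightarrow> bool) \<Rightarrow> 'a set \<Rightarrow> ('a \<Rightarrow> real) \<Rightarrow> real \<Rightarrow> 'a set \<Rightarrow> bool" where
  "heavy_module E V c a H \<longleftrightarrow> H \<subseteq> V \<and> H \<noteq> {} \<and> connected_on E H \<and> (\<forall>v\<in>H. c v > a) \<and>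
     (\<forall>H'. H \<subseteq> H' \<and> H' \<subseteq> V \<and> connected_on E H' \<and> (\<forall>v\<in>H'. c v > a) \<longrightarrow> H' = H)"

definition valid_X :: "('a \<Rightarrow> 'a \<Rightarrow> bool) \<Rightarrow> 'a set \<Rightarrow> ('a \<Rightarrow> real) \<Rightarrow> real \<Rightarrow> 'a set \<Rightarrow> bool" where
  "valid_X E V c a X \<longleftrightarrow> (\<exists>f. (\<forall>H. heavy_module E V c a H \<longrightarrow> f H \<in> H) \<and>
       X = f ` {H. heavy_module E V c a H})"

definition Yset :: "('a \<Rightarrow> 'a \<Rightarrow> bool) \<Rightarrow> 'a set \<Rightarrow> 'a set \<Rightarrow> 'a set" where
  "Yset E V X = X \<union> {v \<in> steiner E V X. degree_in E (steiner E V X) v \<ge> 3}"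

definition Z_pair :: "('a \<Rightarrow> 'a \<Rightarrow> bool) \<Rightarrow> 'a set \<Rightarrow> 'a set \<Rightarrow> 'a \<Rightarrow> 'a \<Rightarrow> bool" where
  "Z_pair E V Y u v \<longleftrightarrow> u \<in> Y \<and> v \<in> Y \<and> path_interior E V u v \<noteq> {} \<and>
       path_interior E V u v \<inter> Y = {}"

definition valid_Z_choice :: "('a \<Rightarrow> 'a \<Rightarrow> bool) \<Rightarrow> 'a set \<Rightarrow> ('a \<Rightarrow> real) \<Rightarrow> 'a set \<Rightarrow> ('a \<Rightarrow> 'a \<Rightarrow> 'a) \<Rightarrow> bool" where
  "valid_Z_choice E V c Y g \<longleftrightarrow> (\<forall>u v. Z_pair E V Y u v \<longrightarrow>
       g u v = g v u \<and> g u v \<in> path_interior E V u v \<and>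
       (\<forall>w\<in>path_interior E V u v. c (g u v) \<le> c w))"

definition Zset :: "('a \<Rightarrow> 'a \<Rightarrow> bool) \<Rightarrow> 'a set \<Rightarrow> 'a set \<Rightarrow> ('a \<Rightarrow> 'a \<Rightarrow> 'a) \<Rightarrow> 'a set" where
  "Zset E V Y g = Y \<union> {g u v | u v. Z_pair E V Y u v}"

definition vertex_ranking :: "('a \<Rightarrow> 'a \<Rightarrow> bool) \<Rightarrow> 'a set \<Rightarrow> ('a \<Rightarrow> nat) \<Rightarrow> bool" where
  "vertex_ranking E S l \<longleftrightarrow> (\<forall>v\<in>S. l v \<ge> 1) \<and>
     (\<forall>u\<in>S. \<forall>v\<in>S. u \<noteq> v \<and> l u = l v \<longrightarrow> (\<exists>z\<in>path_interior E S u v. l z > l v))"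

definition optimal_ranking :: "('a \<Rightarrow> 'a \<Rightarrow> bool) \<Rightarrow> 'a set \<Rightarrow> ('a \<Rightarrow> nat) \<Rightarrow> bool" where
  "optimal_ranking E S l \<longleftrightarrow> vertex_ranking E S l \<and>
     (\<forall>l'. vertex_ranking E S l' \<longrightarrow> card (l ` S) \<le> card (l' ` S))"

inductive ranking_dtree :: "('a \<Rightarrow> 'a \<Rightarrow> bool) \<Rightarrow> ('a \<Rightarrow> nat) \<Rightarrow> 'a set \<Rightarrow> 'a dtree \<Rightarrow> bool"
  for E l where
  "z \<in> S \<Longrightarrow> l z = Max (l ` S) \<Longrightarrow> distinct Cs \<Longrightarrow> set Cs = components E (S - {z}) \<Longrightarrow>
   list_all2 (ranking_dtree E l) Cs ts \<Longrightarrow> ranking_dtree E l S (DNode z ts)"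

end

theory Submission
  imports Defs
begin

definition Rl :: "('a \<Rightarrow> 'a \<Rightarrow> bool) \<Rightarrow> 'a set \<Rightarrow> ('a \<times> 'a) set" where
  "Rl E S = {(x, y). x \<in> S \<and> y \<in> S \<and> E x y}"

lemma conn_def': "connected_on E S \<longleftrightarrow> (\<forall>u\<in>S. \<forall>v\<in>S. (u, v) \<in> (Rl E S)\<^sup>*)"
  unfolding connected_on_def Rl_def by simp

lemma Rl_mono: "S \<subseteq> T \<Longrightarrow> (Rl E S)\<^sup>* \<subseteq> (Rl E T)\<^sup>*"
  unfolding Rl_def by (rule rtrancl_mono) auto

lemma conn_union:
  assumes "connected_on E A" "connected_on E B" "A \<inter> B \<noteq> {}"
  shows "connected_on E (A \<union> B)"
proof -
  obtain z where z: "z \<in> A" "z \<in> B" using assms(3) by blast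
  have A1: "(Rl E A)\<^sup>* \<subseteq> (Rl E (A \<union> B))\<^sup>*" "(Rl E B)\<^sup>* \<subseteq> (Rl E (A \<union> B))\<^sup>*"
    using Rl_mono[of A "A \<union> B" E] Rl_mono[of B "A \<union> B" E] by auto
  have 1: "(u, z) \<in> (Rl E (A \<union> B))\<^sup>*" if "u \<in> A \<union> B" for u
    using that z assms(1,2) A1 unfolding conn_def' by blast
  have 2: "(z, u) \<in> (Rl E (A \<union> B))\<^sup>*" if "u \<in> A \<union> B" for u
    using that z assms(1,2) A1 unfolding conn_def' by blast
  show ?thesis unfolding conn_def' using 1 2 by (meson rtrancl_trans)
qed

lemma conn_sub1: "(\<forall>u\<in>S. \<forall>v\<in>S. u = v) \<Longrightarrow> connected_on E S"
  unfolding conn_def' by auto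

lemma conn_edge: assumes "E x y" "E y x" shows "connected_on E {x, y}"
proof -
  have "(x, y) \<in> (Rl E {x,y})\<^sup>*" "(y, x) \<in> (Rl E {x,y})\<^sup>*"
    using assms unfolding Rl_def by auto
  then show ?thesis unfolding conn_def' by auto
qed

lemma last_edge:
  assumes "(u, x) \<in> (Rl E A)\<^sup>*" "u \<noteq> x"
  shows "\<exists>y\<in>A. E y x \<and> x \<in> A"
  using assms by (induction rule: rtrancl_induct) (auto simp: Rl_def)

lemma conn_remove:
  assumes c: "connected_on E A" and sy: "\<forall>u v. E u v \<longrightarrow> E v u"
    and one: "\<forall>w1 w2. w1 \<in> A \<longrightarrow> w2 \<in> A \<longrightarrow> E x w1 \<longrightarrow> E x w2 \<longrightarrow> w1 = w2"
  shows "connected_on E (A - {x})"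
  unfolding conn_def'
proof (intro ballI)
  fix u v assume u: "u \<in> A - {x}" and v: "v \<in> A - {x}"
  let ?R = "(Rl E (A - {x}))\<^sup>*"
  have uv: "(u, v) \<in> (Rl E A)\<^sup>*" using c u v unfolding conn_def' by auto
  have "(v \<noteq> x \<longrightarrow> (u, v) \<in> ?R) \<and> (v = x \<longrightarrow> (\<forall>w\<in>A. E x w \<longrightarrow> (u, w) \<in> ?R))"
    using uv
  proof (induction rule: rtrancl_induct)
    case base then show ?case using u by auto
  next
    case (step y z)
    have yz: "y \<in> A" "z \<in> A" "E y z" using step(2) unfolding Rl_def by auto
    show ?case
    proof (cases "y = x")
      case True
      then show ?thesis using step yz sy by auto
    next
      case False
      then have uy: "(u, y) \<in> ?R" using step by auto
      show ?thesis
      proof (cases "z = x")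
        case True
        have "\<forall>w\<in>A. E x w \<longrightarrow> (u, w) \<in> ?R"
        proof (intro ballI impI)
          fix w assume "w \<in> A" "E x w"
          moreover have "E x y" using yz sy True by auto
          ultimately have "w = y" using one yz by blast
          then show "(u, w) \<in> ?R" using uy by simp
        qed
        then show ?thesis using True by simp
      next
        case False
        then have "(y, z) \<in> Rl E (A - {x})" using yz \<open>y \<noteq> x\<close> unfolding Rl_def by auto
        then show ?thesis using uy False by auto
      qed
    qed
  qed
  then show "(u, v) \<in> ?R" using v by auto
qed

lemma edges_finite: "finite V \<Longrightarrow> finite (edges_on E V)"
proof -
  assume "finite V"
  have "edges_on E V \<subseteq> (\<lambda>(u,v). {u,v}) ` (V \<times> V)" unfolding edges_on_def by auto
  then show ?thesis using \<open>finite V\<close> by (meson finite_SigmaI finite_imageI finite_subset)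
qed

lemma handshake:
  assumes fin: "finite V" and irr: "\<forall>u. \<not> E u u" and sy: "\<forall>u v. E u v \<longrightarrow> E v u"
  shows "(\<Sum>u\<in>V. card {w\<in>V. E u w}) = 2 * card (edges_on E V)"
proof -
  let ?P = "SIGMA u:V. {w\<in>V. E u w}"
  let ?f = "\<lambda>(u::'a,w). {u,w}"
  have h1: "card ?P = (\<Sum>u\<in>V. card {w\<in>V. E u w})" using fin by simp
  have "finite ?P" using fin by auto
  then have h2: "card ?P = (\<Sum>e\<in>?f ` ?P. card {p \<in> ?P. ?f p = e})"
    using sum.image_gen[of ?P "\<lambda>_. 1::nat" ?f] by simp
  have h3: "?f ` ?P = edges_on E V" unfolding edges_on_def by auto
  have h4: "card {p \<in> ?P. ?f p = e} = 2" if ein: "e \<in> edges_on E V" for e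
  proof -
    obtain x y where e: "e = {x,y}" "x \<in> V" "y \<in> V" "E x y" using ein unfolding edges_on_def by blast
    have "x \<noteq> y" using irr e by auto
    have "{p \<in> ?P. ?f p = e} = {(x,y),(y,x)}"
      using e sy by (auto simp: doubleton_eq_iff)
    then show ?thesis using \<open>x \<noteq> y\<close> by simp
  qed
  have "(\<Sum>u\<in>V. card {w\<in>V. E u w}) = card ?P" using h1 by simp
  also have "\<dots> = (\<Sum>e\<in>edges_on E V. card {p \<in> ?P. ?f p = e})" using h2 h3 by simp
  also have "\<dots> = (\<Sum>e\<in>edges_on E V. 2)" using h4 by (intro sum.cong) auto
  also have "\<dots> = 2 * card (edges_on E V)" by simp
  finally show ?thesis .
qed

lemma exists_leaf:
  assumes t: "is_tree E V" and c2: "card V \<ge> 2"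
  shows "\<exists>x\<in>V. card {w\<in>V. E x w} \<le> 1"
proof (rule ccontr)
  assume "\<not> ?thesis"
  then have "\<forall>x\<in>V. 2 \<le> card {w\<in>V. E x w}" by auto
  then have "(\<Sum>u\<in>V. 2) \<le> (\<Sum>u\<in>V. card {w\<in>V. E u w})" by (intro sum_mono) auto
  also have "\<dots> = 2 * card (edges_on E V)" using t handshake unfolding is_tree_def by blast
  also have "\<dots> = 2 * (card V - 1)" using t unfolding is_tree_def by simp
  finally show False using c2 by simp
qed

lemma has_nbr:
  assumes "connected_on E V" "x \<in> V" "u \<in> V" "u \<noteq> x" "\<forall>u v. E u v \<longrightarrow> E v u"
  shows "\<exists>y\<in>V. E x y"
proof -
  have "(u, x) \<in> (Rl E V)\<^sup>*" using assms unfolding conn_def' by blast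
  from last_edge[OF this assms(4)] obtain y where "y \<in> V" "E y x" by blast
  then show ?thesis using assms(5) by blast
qed

lemma tree_remove_leaf:
  assumes t: "is_tree E V" and c2: "card V \<ge> 2" and x: "x \<in> V" and leaf: "card {w\<in>V. E x w} \<le> 1"
  shows "is_tree E (V - {x})" "\<exists>y\<in>V. E x y \<and> (\<forall>w\<in>V. E x w \<longrightarrow> w = y)"
proof -
  have fin: "finite V" and sy: "\<forall>u v. E u v \<longrightarrow> E v u" and irr: "\<forall>u. \<not> E u u"
    and cV: "connected_on E V" and ce: "card (edges_on E V) = card V - 1"
    using t unfolding is_tree_def by auto
  have "\<not> (\<forall>a\<in>V. \<forall>b\<in>V. a = b)" using c2 card_le_Suc0_iff_eq[OF fin] by auto
  then obtain u where u: "u \<in> V" "u \<noteq> x" using x by blast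
  obtain y where y: "y \<in> V" "E x y" using has_nbr[OF cV x u sy] by blast
  have fin2: "finite {w\<in>V. E x w}" using fin by auto
  have uniq: "\<forall>w\<in>V. E x w \<longrightarrow> w = y"
  proof (intro ballI impI)
    fix w assume "w \<in> V" "E x w"
    then have "{w, y} \<subseteq> {w\<in>V. E x w}" using y by auto
    then have "card {w, y} \<le> 1" using leaf card_mono[OF fin2] by (meson order_trans)
    then show "w = y" by (cases "w = y") auto
  qed
  then show "\<exists>y\<in>V. E x y \<and> (\<forall>w\<in>V. E x w \<longrightarrow> w = y)" using y by auto
  have one: "\<forall>w1 w2. w1 \<in> V \<longrightarrow> w2 \<in> V \<longrightarrow> E x w1 \<longrightarrow> E x w2 \<longrightarrow> w1 = w2"
    using uniq by blast
  have cV': "connected_on E (V - {x})"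
    using conn_remove[OF cV sy one] .
  have "edges_on E (V - {x}) = edges_on E V - {{x, y}}"
  proof
    show "edges_on E (V - {x}) \<subseteq> edges_on E V - {{x, y}}"
    proof
      fix e assume "e \<in> edges_on E (V - {x})"
      then obtain p q where pq: "e = {p, q}" "p \<in> V - {x}" "q \<in> V - {x}" "E p q"
        unfolding edges_on_def by blast
      have "e \<in> edges_on E V" using pq unfolding edges_on_def by blast
      moreover have "x \<notin> e" using pq by blast
      ultimately show "e \<in> edges_on E V - {{x, y}}" by blast
    qed
    show "edges_on E V - {{x, y}} \<subseteq> edges_on E (V - {x})"
    proof
      fix e assume e: "e \<in> edges_on E V - {{x, y}}"
      then obtain p q where pq: "e = {p, q}" "p \<in> V" "q \<in> V" "E p q" unfolding edges_on_def by auto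
      have "p \<noteq> x"
      proof
        assume "p = x"
        then have "q = y" using uniq pq by blast
        then show False using e pq \<open>p = x\<close> by blast
      qed
      moreover have "q \<noteq> x"
      proof
        assume "q = x"
        then have "E x p" using sy pq by blast
        then have "p = y" using uniq pq by blast
        then show False using e pq \<open>q = x\<close> by (auto simp: insert_commute)
      qed
      ultimately show "e \<in> edges_on E (V - {x})" using pq unfolding edges_on_def by auto
    qed
  qed
  moreover have "{x, y} \<in> edges_on E V" using x y unfolding edges_on_def by auto
  ultimately have "card (edges_on E (V - {x})) = card V - 2"
    using ce edges_finite[OF fin, of E] by (simp add: card_Diff_singleton)
  then show "is_tree E (V - {x})"
    using t cV' x u fin unfolding is_tree_def by auto
qed

lemma tree_inter:
  assumes "is_tree E V" "A \<subseteq> V" "B \<subseteq> V" "connected_on E A" "connected_on E B" "A \<inter> B \<noteq> {}"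
  shows "connected_on E (A \<inter> B)"
  using assms
proof (induction "card V" arbitrary: V A B rule: less_induct)
  case less
  have fin: "finite V" and sy: "\<forall>u v. E u v \<longrightarrow> E v u" and irr: "\<forall>u. \<not> E u u" and ne: "V \<noteq> {}"
    using less.prems unfolding is_tree_def by auto
  show ?case
  proof (cases "card V \<ge> 2")
    case False
    then have "card V \<le> 1" by simp
    then have "\<forall>u\<in>V. \<forall>v\<in>V. u = v" using card_le_Suc0_iff_eq[OF fin] by simp
    then show ?thesis using less.prems by (intro conn_sub1) blast
  next
    case True
    obtain x where x: "x \<in> V" "card {w\<in>V. E x w} \<le> 1" using exists_leaf[OF less.prems(1) True] by blast
    note rl = tree_remove_leaf[OF less.prems(1) True x]
    obtain y where y: "y \<in> V" "E x y" "\<forall>w\<in>V. E x w \<longrightarrow> w = y" using rl(2) by blast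
    have oneA: "\<forall>w1 w2. w1 \<in> A \<longrightarrow> w2 \<in> A \<longrightarrow> E x w1 \<longrightarrow> E x w2 \<longrightarrow> w1 = w2"
      using y(3) less.prems(2) by blast
    have oneB: "\<forall>w1 w2. w1 \<in> B \<longrightarrow> w2 \<in> B \<longrightarrow> E x w1 \<longrightarrow> E x w2 \<longrightarrow> w1 = w2"
      using y(3) less.prems(3) by blast
    have cA: "connected_on E (A - {x})"
      using conn_remove[OF less.prems(4) sy oneA] .
    have cB: "connected_on E (B - {x})"
      using conn_remove[OF less.prems(5) sy oneB] .
    have lt: "card (V - {x}) < card V" using fin x by (meson card_Diff1_less)
    show ?thesis
    proof (cases "(A - {x}) \<inter> (B - {x}) = {}")
      case True
      then show ?thesis by (intro conn_sub1) blast
    next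
      case False
      have IH: "connected_on E ((A - {x}) \<inter> (B - {x}))"
        using less.hyps[OF lt rl(1) _ _ cA cB False] less.prems(2,3) by blast
      show ?thesis
      proof (cases "x \<in> A \<inter> B")
        case False
        then have "A \<inter> B = (A - {x}) \<inter> (B - {x})" by blast
        then show ?thesis using IH by simp
      next
        case True
        obtain u where u: "u \<in> A - {x}" "u \<in> B - {x}" using \<open>(A - {x}) \<inter> (B - {x}) \<noteq> {}\<close> by blast
        have ux: "u \<noteq> x" using u by blast
        have "(u, x) \<in> (Rl E A)\<^sup>*" using less.prems(4) u True unfolding conn_def' by blast
        from last_edge[OF this ux] obtain y1 where y1: "y1 \<in> A" "E y1 x" by blast
        have "(u, x) \<in> (Rl E B)\<^sup>*" using less.prems(5) u True unfolding conn_def' by blast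
        from last_edge[OF this ux] obtain y2 where y2: "y2 \<in> B" "E y2 x" by blast
        have e1: "E x y1" using sy y1 by blast
        have v1: "y1 \<in> V" using y1(1) less.prems(2) by blast
        have eq1: "y1 = y" using y(3) v1 e1 by simp
        have e2: "E x y2" using sy y2 by blast
        have v2: "y2 \<in> V" using y2(1) less.prems(3) by blast
        have eq2: "y2 = y" using y(3) v2 e2 by simp
        have "y \<noteq> x" using y(2) irr by metis
        then have yin: "y \<in> (A - {x}) \<inter> (B - {x})" using y1 y2 eq1 eq2 by auto
        have eqAB: "A \<inter> B = ((A - {x}) \<inter> (B - {x})) \<union> {x, y}" using True yin by blast
        have c2: "connected_on E {x, y}" using conn_edge[of E x y] y(2) sy by blast
        have ne2: "((A - {x}) \<inter> (B - {x})) \<inter> {x, y} \<noteq> {}" using yin by blast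
        show ?thesis unfolding eqAB by (rule conn_union[OF IH c2 ne2])
      qed
    qed
  qed
qed

lemma la2_1: assumes "list_all2 P xs ys" "x \<in> set xs" shows "\<exists>y\<in>set ys. P x y"
proof -
  obtain i where i: "i < length xs" "xs ! i = x" using assms(2) by (auto simp: in_set_conv_nth)
  have "length xs = length ys" using assms(1) by (rule list_all2_lengthD)
  then have "ys ! i \<in> set ys" using i by simp
  moreover have "P x (ys ! i)" using assms(1) i by (auto simp: list_all2_conv_all_nth)
  ultimately show ?thesis by blast
qed

lemma la2_2: assumes "list_all2 P xs ys" "y \<in> set ys" shows "\<exists>x\<in>set xs. P x y"
proof -
  obtain i where i: "i < length ys" "ys ! i = y" using assms(2) by (auto simp: in_set_conv_nth)
  have "length xs = length ys" using assms(1) by (rule list_all2_lengthD)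
  then have "xs ! i \<in> set xs" using i by simp
  moreover have "P (xs ! i) y" using assms(1) i by (auto simp: list_all2_conv_all_nth)
  ultimately show ?thesis by blast
qed

lemma comp_props: "C \<in> components E X \<Longrightarrow> C \<subseteq> X \<and> C \<noteq> {} \<and> connected_on E C"
  unfolding components_def by blast

lemma comp_absorb:
  assumes "C \<in> components E X" "D \<subseteq> X" "connected_on E D" "C \<inter> D \<noteq> {}"
  shows "D \<subseteq> C"
proof -
  have c: "C \<subseteq> X" "connected_on E C" using comp_props[OF assms(1)] by auto
  have "connected_on E (C \<union> D)" using conn_union[OF c(2) assms(3,4)] .
  moreover have "C \<union> D \<subseteq> X" using c assms(2) by blast
  ultimately have "C \<union> D = C" using assms(1) unfolding components_def by blast
  then show ?thesis by blast
qed

lemma comp_disj: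
  assumes "C1 \<in> components E X" "C2 \<in> components E X" "v \<in> C1" "v \<in> C2"
  shows "C1 = C2"
proof -
  have a: "C1 \<subseteq> X" "connected_on E C1" using comp_props[OF assms(1)] by auto
  have b: "C2 \<subseteq> X" "connected_on E C2" using comp_props[OF assms(2)] by auto
  have "C2 \<subseteq> C1" using comp_absorb[OF assms(1) b] assms(3,4) by blast
  moreover have "C1 \<subseteq> C2" using comp_absorb[OF assms(2) a] assms(3,4) by blast
  ultimately show ?thesis by blast
qed

lemma comp_exists:
  assumes sy: "\<forall>u v. E u v \<longrightarrow> E v u" and v: "v \<in> X"
  shows "\<exists>C\<in>components E X. v \<in> C"
proof -
  define C where "C = {u. (v, u) \<in> (Rl E X)\<^sup>*}"
  have CX: "C \<subseteq> X"
  proof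
    fix u assume "u \<in> C"
    then have "(v, u) \<in> (Rl E X)\<^sup>*" unfolding C_def by simp
    then show "u \<in> X" using v by (induction rule: rtrancl_induct) (auto simp: Rl_def)
  qed
  have vC: "v \<in> C" unfolding C_def by simp
  have reachC: "(v, u) \<in> (Rl E C)\<^sup>*" if "(v, u) \<in> (Rl E X)\<^sup>*" for u
    using that
  proof (induction rule: rtrancl_induct)
    case base then show ?case by simp
  next
    case (step y z)
    have "y \<in> C" "z \<in> C" using step(1,2) unfolding C_def by auto
    then have "(y, z) \<in> Rl E C" using step(2) unfolding Rl_def by auto
    then show ?case using step(3) by simp
  qed
  have symR: "sym (Rl E C)" using sy unfolding Rl_def sym_def by auto
  have connC: "connected_on E C"
    unfolding conn_def'
  proof (intro ballI)
    fix x y assume "x \<in> C" "y \<in> C"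
    then have vx: "(v, x) \<in> (Rl E C)\<^sup>*" and vy: "(v, y) \<in> (Rl E C)\<^sup>*"
      using reachC unfolding C_def by auto
    have "(x, v) \<in> (Rl E C)\<^sup>*" using sym_rtrancl[OF symR] vx unfolding sym_def by blast
    then show "(x, y) \<in> (Rl E C)\<^sup>*" using vy by (rule rtrancl_trans)
  qed
  have "C \<in> components E X"
    unfolding components_def
  proof (intro CollectI conjI allI impI)
    show "C \<subseteq> X" by (rule CX)
    show "C \<noteq> {}" using vC by blast
    show "connected_on E C" by (rule connC)
    fix D assume D: "C \<subseteq> D \<and> D \<subseteq> X \<and> connected_on E D"
    have "D \<subseteq> C"
    proof
      fix d assume "d \<in> D"
      then have "(v, d) \<in> (Rl E D)\<^sup>*" using D vC unfolding conn_def' by blast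
      then have "(v, d) \<in> (Rl E X)\<^sup>*" using Rl_mono[of D X E] D by blast
      then show "d \<in> C" unfolding C_def by simp
    qed
    then show "D = C" using D by blast
  qed
  then show ?thesis using vC by blast
qed

lemma comp_finite: "finite X \<Longrightarrow> finite (components E X)"
proof -
  assume "finite X"
  moreover have "components E X \<subseteq> Pow X" unfolding components_def by blast
  ultimately show ?thesis by (meson finite_Pow_iff finite_subset)
qed

lemma dtree_exists: "finite W \<Longrightarrow> W \<noteq> {} \<Longrightarrow> \<exists>t. is_dtree E W t"
proof (induction "card W" arbitrary: W rule: less_induct)
  case less
  obtain v where v: "v \<in> W" using less.prems by blast
  obtain Cs where Cs: "set Cs = components E (W - {v})" "distinct Cs"
    using finite_distinct_list[OF comp_finite[of "W - {v}" E]] less.prems(1) by blast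
  have "\<forall>C\<in>set Cs. \<exists>t. is_dtree E C t"
  proof
    fix C assume "C \<in> set Cs"
    then have C: "C \<subseteq> W - {v}" "C \<noteq> {}" using comp_props Cs(1) by blast+
    then have "finite C" using less.prems(1) finite_subset by blast
    moreover have "card C \<le> card (W - {v})" using C(1) less.prems(1) by (intro card_mono) auto
    moreover have "card (W - {v}) < card W" using v less.prems(1) by (rule card_Diff1_less[rotated])
    ultimately have "card C < card W" by linarith
    moreover note \<open>finite C\<close>
    ultimately show "\<exists>t. is_dtree E C t" using less.hyps C by blast
  qed
  then obtain f where f: "\<forall>C\<in>set Cs. is_dtree E C (f C)" by metis
  have "list_all2 (is_dtree E) Cs (map f Cs)"
    using f by (auto simp: list_all2_conv_all_nth)
  then have "is_dtree E W (DNode v (map f Cs))"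
    using is_dtree.intros[OF v Cs(2) Cs(1)] by blast
  then show ?case by blast
qed

lemma dpaths_finite: "finite (dpaths t)"
  by (induction t rule: dpaths.induct) auto

lemma dpaths_ne: "dpaths t \<noteq> {}"
  by (cases t) auto

lemma dpaths_cons:
  "p \<in> dpaths (DNode v ts) \<Longrightarrow> p = [v] \<or> (\<exists>t\<in>set ts. \<exists>p'\<in>dpaths t. p = v # p')"
  by auto

lemma steiner_sub: "S0 \<subseteq> U \<Longrightarrow> U \<subseteq> W \<Longrightarrow> connected_on E U \<Longrightarrow> steiner E W S0 \<subseteq> U"
  unfolding steiner_def by blast

lemma steiner_self: "S0 \<subseteq> W \<Longrightarrow> connected_on E S0 \<Longrightarrow> steiner E W S0 = S0"
  unfolding steiner_def by blast

lemma pint_sub: "u \<in> U \<Longrightarrow> v \<in> U \<Longrightarrow> U \<subseteq> W \<Longrightarrow> connected_on E U \<Longrightarrow> path_interior E W u v \<subseteq> U"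
  unfolding path_interior_def using steiner_sub[of "{u,v}" U W E] by blast

lemma ub_paths:
  assumes vr: "vertex_ranking E S l" and finS: "finite S"
  shows "ranking_dtree E l C t \<Longrightarrow> C \<subseteq> S \<Longrightarrow> connected_on E C \<Longrightarrow>
    (\<forall>p\<in>dpaths t. length p \<le> card (l ` C) \<and> set p \<subseteq> C)"
proof (induction rule: ranking_dtree.induct)
  case (1 z C Cs ts)
  have finC: "finite C" using finS 1 finite_subset by blast
  have key: "l u < l z" if u: "u \<in> C" "u \<noteq> z" for u
  proof -
    have le: "l u \<le> l z" using 1(2) finC u(1) by simp
    show ?thesis
    proof (rule ccontr)
      assume "\<not> l u < l z"
      then have eq: "l u = l z" using le by simp
      have "u \<in> S" "z \<in> S" using u(1) 1 by auto
      then obtain w where w: "w \<in> path_interior E S u z" "l w > l z"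
        using vr eq u(2) unfolding vertex_ranking_def by blast
      have "path_interior E S u z \<subseteq> C" using pint_sub[of u C z S E] u(1) 1 by blast
      then have "w \<in> C" using w by blast
      then have "l w \<le> l z" using 1(2) finC by simp
      then show False using w by simp
    qed
  qed
  have "0 < card (l ` C)" using finC 1(1) by (auto simp: card_gt_0_iff)
  then have cpos: "1 \<le> card (l ` C)" by simp
  show ?case
  proof
    fix p assume "p \<in> dpaths (DNode z ts)"
    then have "p = [z] \<or> (\<exists>t\<in>set ts. \<exists>p'\<in>dpaths t. p = z # p')" by (rule dpaths_cons)
    then consider "p = [z]" | t' p' where "t' \<in> set ts" "p' \<in> dpaths t'" "p = z # p'"
      by blast
    then show "length p \<le> card (l ` C) \<and> set p \<subseteq> C"
    proof cases
      case 1
      then show ?thesis using cpos \<open>z \<in> C\<close> by simp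
    next
      case 2
      obtain C' where C': "C' \<in> set Cs" "ranking_dtree E l C' t' \<and>
          (C' \<subseteq> S \<longrightarrow> connected_on E C' \<longrightarrow> (\<forall>p\<in>dpaths t'. length p \<le> card (l ` C') \<and> set p \<subseteq> C'))"
        using la2_2[OF \<open>list_all2 _ Cs ts\<close> 2(1)] by blast
      have cp: "C' \<subseteq> C - {z}" "connected_on E C'"
        using comp_props[of C' E "C - {z}"] C'(1) \<open>set Cs = _\<close> by auto
      then have IH: "length p' \<le> card (l ` C')" "set p' \<subseteq> C'"
        using C'(2) 2(2) \<open>C \<subseteq> S\<close> by auto
      have "l ` C' \<subseteq> l ` C - {l z}" using key cp(1) by fastforce
      then have "card (l ` C') \<le> card (l ` C - {l z})" using finC by (intro card_mono) auto
      also have "\<dots> = card (l ` C) - 1" using \<open>z \<in> C\<close> finC by (simp add: card_Diff_singleton)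
      finally have "card (l ` C') \<le> card (l ` C) - 1" .
      then have "length p \<le> card (l ` C)" using IH(1) 2(3) cpos by simp
      moreover have "set p \<subseteq> C" using IH(2) cp(1) 2(3) \<open>z \<in> C\<close> by auto
      ultimately show ?thesis by simp
    qed
  qed
qed

definition hcount :: "'a set \<Rightarrow> 'a dtree \<Rightarrow> nat" where
  "hcount S t = Max ((\<lambda>p. length (filter (\<lambda>x. x \<in> S) p)) ` dpaths t)"

lemma hcount_ge: "p \<in> dpaths t \<Longrightarrow> length (filter (\<lambda>x. x \<in> S) p) \<le> hcount S t"
  unfolding hcount_def by (intro Max_ge) (auto simp: dpaths_finite)

lemma hcount_att: "\<exists>p\<in>dpaths t. length (filter (\<lambda>x. x \<in> S) p) = hcount S t"
proof -
  have "hcount S t \<in> (\<lambda>p. length (filter (\<lambda>x. x \<in> S) p)) ` dpaths t"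
    unfolding hcount_def using dpaths_finite dpaths_ne by (intro Max_in) auto
  then show ?thesis by auto
qed

lemma hcount_child:
  assumes "t' \<in> set ts"
  shows "hcount S t' + (if v \<in> S then 1 else 0) \<le> hcount S (DNode v ts)"
proof -
  obtain p where p: "p \<in> dpaths t'" "length (filter (\<lambda>x. x \<in> S) p) = hcount S t'"
    using hcount_att by blast
  have "v # p \<in> dpaths (DNode v ts)" using assms p(1) by auto
  then have "length (filter (\<lambda>x. x \<in> S) (v # p)) \<le> hcount S (DNode v ts)" by (rule hcount_ge)
  then show ?thesis using p(2) by (simp split: if_splits)
qed

lemma hcount_root: "v \<in> S \<Longrightarrow> 1 \<le> hcount S (DNode v ts)"
proof -
  assume "v \<in> S"
  have "[v] \<in> dpaths (DNode v ts)" by simp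
  then have "length (filter (\<lambda>x. x \<in> S) [v]) \<le> hcount S (DNode v ts)" by (rule hcount_ge)
  then show ?thesis using \<open>v \<in> S\<close> by simp
qed

lemma lb_rank:
  assumes tree: "is_tree E V" and SV: "S \<subseteq> V" and Sc: "connected_on E S"
  shows "is_dtree E W t \<Longrightarrow> W \<subseteq> V \<Longrightarrow> connected_on E W \<Longrightarrow>
    \<exists>l'. (\<forall>v\<in>S \<inter> W. 1 \<le> l' v \<and> l' v \<le> hcount S t) \<and>
      (\<forall>u\<in>S \<inter> W. \<forall>v\<in>S \<inter> W. u \<noteq> v \<and> l' u = l' v \<longrightarrow>
         (\<exists>z\<in>path_interior E S u v \<inter> W. l' v < l' z))"
proof (induction rule: is_dtree.induct)
  case (1 w W Cs ts)
  have sy: "\<forall>u v. E u v \<longrightarrow> E v u" using tree unfolding is_tree_def by blast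
  define P1 where "P1 C t' l' \<longleftrightarrow> (\<forall>v\<in>S \<inter> C. 1 \<le> l' v \<and> l' v \<le> hcount S t') \<and>
      (\<forall>u\<in>S \<inter> C. \<forall>v\<in>S \<inter> C. u \<noteq> v \<and> l' u = l' v \<longrightarrow>
         (\<exists>z\<in>path_interior E S u v \<inter> C. l' v < l' z))" for C t' l'
  have compC: "C \<subseteq> W - {w} \<and> C \<noteq> {} \<and> connected_on E C" if "C \<in> set Cs" for C
  proof -
    have "C \<in> components E (W - {w})" using that 1(3) by simp
    from comp_props[OF this] show ?thesis .
  qed
  have IHs: "list_all2 (\<lambda>C t'. C \<subseteq> V \<longrightarrow> connected_on E C \<longrightarrow> (\<exists>l'. P1 C t' l')) Cs ts"
    using 1(4) unfolding P1_def by (rule list_all2_mono) blast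
  have "\<forall>C\<in>set Cs. \<exists>l'. \<exists>t'\<in>set ts. P1 C t' l'"
  proof
    fix C assume C: "C \<in> set Cs"
    have ex: "\<exists>t'\<in>set ts. C \<subseteq> V \<longrightarrow> connected_on E C \<longrightarrow> (\<exists>l'. P1 C t' l')"
      using la2_1[OF IHs C] by simp
    have "C \<subseteq> V" "connected_on E C" using compC[OF C] 1(5) by auto
    then show "\<exists>l'. \<exists>t'\<in>set ts. P1 C t' l'" using ex by blast
  qed
  then obtain L where L: "\<forall>C\<in>set Cs. \<exists>t'\<in>set ts. P1 C t' (L C)" by metis
  define comp where "comp x = (SOME C. C \<in> set Cs \<and> x \<in> C)" for x
  have comp_ok: "comp x \<in> set Cs \<and> x \<in> comp x" if "x \<in> W" "x \<noteq> w" for x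
  proof -
    have "x \<in> W - {w}" using that by blast
    from comp_exists[OF sy this] obtain C where C: "C \<in> components E (W - {w})" "x \<in> C" by blast
    have "C \<in> set Cs" using C(1) 1(3) by simp
    then have "\<exists>C. C \<in> set Cs \<and> x \<in> C" using C(2) by blast
    then show ?thesis unfolding comp_def by (rule someI_ex)
  qed
  have comp_uniq: "comp x = C" if "C \<in> set Cs" "x \<in> C" for x C
  proof -
    have "x \<in> W" "x \<noteq> w" using compC[OF that(1)] that(2) by auto
    then have "comp x \<in> set Cs" "x \<in> comp x" using comp_ok by auto
    moreover have "comp x \<in> components E (W - {w})" "C \<in> components E (W - {w})"
      using \<open>comp x \<in> set Cs\<close> that(1) 1(3) by simp_all
    ultimately show ?thesis using comp_disj[of "comp x" E "W - {w}" C x] that(2) by blast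
  qed
  define h where "h = hcount S (DNode w ts)"
  define l' where "l' x = (if x = w then h else L (comp x) x)" for x
  have bnd: "1 \<le> l' x \<and> l' x + (if w \<in> S then 1 else 0) \<le> h" if "x \<in> S \<inter> W" "x \<noteq> w" for x
  proof -
    have co: "comp x \<in> set Cs" "x \<in> comp x" using comp_ok that by auto
    obtain t' where t': "t' \<in> set ts" "P1 (comp x) t' (L (comp x))" using L co(1) by blast
    have "1 \<le> L (comp x) x \<and> L (comp x) x \<le> hcount S t'" using t'(2) co(2) that(1) unfolding P1_def by blast
    moreover have "hcount S t' + (if w \<in> S then 1 else 0) \<le> h" unfolding h_def by (rule hcount_child[OF t'(1)])
    ultimately show ?thesis unfolding l'_def using that(2) by simp
  qed
  have part1: "\<forall>v\<in>S \<inter> W. 1 \<le> l' v \<and> l' v \<le> h"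
  proof
    fix v assume v: "v \<in> S \<inter> W"
    show "1 \<le> l' v \<and> l' v \<le> h"
    proof (cases "v = w")
      case True
      then show ?thesis using v hcount_root[of w S ts] unfolding l'_def h_def by simp
    next
      case False
      then show ?thesis using bnd[OF v] by simp
    qed
  qed
  have part2: "\<exists>z\<in>path_interior E S u v \<inter> W. l' v < l' z"
    if uv: "u \<in> S \<inter> W" "v \<in> S \<inter> W" "u \<noteq> v" "l' u = l' v" for u v
  proof -
    have uw: "u \<noteq> w"
    proof
      assume "u = w"
      then have "l' v + 1 \<le> l' u" using bnd[OF uv(2)] uv(1,3) by (auto simp: l'_def)
      then show False using uv(4) by simp
    qed
    have vw: "v \<noteq> w"
    proof
      assume "v = w"
      then have "l' u + 1 \<le> l' v" using bnd[OF uv(1)] uv(2,3) by (auto simp: l'_def)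
      then show False using uv(4) by simp
    qed
    have cu: "comp u \<in> set Cs" "u \<in> comp u" using comp_ok uv(1) uw by auto
    have cv: "comp v \<in> set Cs" "v \<in> comp v" using comp_ok uv(2) vw by auto
    have lu: "l' u = L (comp u) u" using uw unfolding l'_def by simp
    have lv: "l' v = L (comp v) v" using vw unfolding l'_def by simp
    show ?thesis
    proof (cases "comp u = comp v")
      case True
      obtain t' where t': "t' \<in> set ts" "P1 (comp u) t' (L (comp u))" using L cu(1) by blast
      have "u \<in> S \<inter> comp u" "v \<in> S \<inter> comp u" using uv cu cv True by auto
      moreover have "L (comp u) u = L (comp u) v" using lu lv uv(4) True by simp
      ultimately obtain z where z: "z \<in> path_interior E S u v \<inter> comp u" "L (comp u) v < L (comp u) z"
        using t'(2) uv(3) unfolding P1_def by blast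
      have zc: "z \<in> W" "z \<noteq> w" using compC[OF cu(1)] z(1) by auto
      have "comp z = comp u" using comp_uniq[OF cu(1)] z(1) by blast
      then have "l' z = L (comp u) z" using zc unfolding l'_def by simp
      then have "l' v < l' z" using z(2) lv True by simp
      moreover have "z \<in> path_interior E S u v \<inter> W" using z(1) zc by blast
      ultimately show ?thesis by blast
    next
      case False
      have allU: "w \<in> U" if U: "{u, v} \<subseteq> U" "U \<subseteq> S" "connected_on E U" for U
      proof (rule ccontr)
        assume wU: "w \<notin> U"
        have "connected_on E (U \<inter> W)"
          using tree_inter[OF tree _ 1(5) U(3) 1(6)] U(1,2) SV uv(1) by blast
        moreover have "U \<inter> W \<subseteq> W - {w}" using wU by blast
        moreover have "comp u \<inter> (U \<inter> W) \<noteq> {}" using cu(2) U(1) uv(1) by blast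
        moreover have "comp u \<in> components E (W - {w})" using cu(1) 1(3) by simp
        ultimately have "U \<inter> W \<subseteq> comp u" using comp_absorb by blast
        then have "v \<in> comp u" using U(1) uv(2) by blast
        then have "comp v = comp u" using comp_uniq[OF cu(1)] by blast
        then show False using False by simp
      qed
      have wS: "w \<in> S" using allU[of S] uv(1,2) Sc by blast
      have "w \<in> steiner E S {u, v}" unfolding steiner_def using allU by blast
      then have wp: "w \<in> path_interior E S u v" unfolding path_interior_def using uw vw by blast
      have "l' v + 1 \<le> h" using bnd[OF uv(2) vw] wS by simp
      then have "l' v < l' w" unfolding l'_def by simp
      then show ?thesis using wp 1(1) by blast
    qed
  qed
  show ?case unfolding h_def[symmetric] using part1 part2 by blast
qed

lemma dtree_paths_sub: "is_dtree E W t \<Longrightarrow> \<forall>p\<in>dpaths t. set p \<subseteq> W"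
proof (induction rule: is_dtree.induct)
  case (1 w W Cs ts)
  show ?case
  proof
    fix p assume "p \<in> dpaths (DNode w ts)"
    then have "p = [w] \<or> (\<exists>t\<in>set ts. \<exists>p'\<in>dpaths t. p = w # p')" by (rule dpaths_cons)
    then consider "p = [w]" | t' p' where "t' \<in> set ts" "p' \<in> dpaths t'" "p = w # p'"
      by blast
    then show "set p \<subseteq> W"
    proof cases
      case 1
      then show ?thesis using \<open>w \<in> W\<close> by simp
    next
      case 2
      obtain C where C: "C \<in> set Cs" "is_dtree E C t' \<and> (\<forall>p\<in>dpaths t'. set p \<subseteq> C)"
        using la2_2[OF \<open>list_all2 _ Cs ts\<close> 2(1)] by blast
      have "C \<subseteq> W - {w}" using comp_props[of C E "W - {w}"] C(1) \<open>set Cs = _\<close> by auto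
      then show ?thesis using C(2) 2(2,3) \<open>w \<in> W\<close> by auto
    qed
  qed
qed

lemma sum_upper: "(\<forall>x\<in>set p. c x \<le> (b::real)) \<Longrightarrow> sum_list (map c p) \<le> real (length p) * b"
  by (induction p) (auto simp: distrib_right)

lemma sum_lower: "(\<forall>x\<in>set p. 0 < c x) \<Longrightarrow> (\<forall>x\<in>set p. x \<in> S \<longrightarrow> (a::real) \<le> c x) \<Longrightarrow>
   a * real (length (filter (\<lambda>x. x \<in> S) p)) \<le> sum_list (map c p)"
proof (induction p)
  case Nil then show ?case by simp
next
  case (Cons x p)
  then have IH: "a * real (length (filter (\<lambda>x. x \<in> S) p)) \<le> sum_list (map c p)" by simp
  show ?case
  proof (cases "x \<in> S")
    case True
    then have "a \<le> c x" using Cons.prems by simp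
    then show ?thesis using IH True by (simp add: distrib_left)
  next
    case False
    then have "0 < c x" using Cons.prems by simp
    then show ?thesis using IH False by simp
  qed
qed

theorem lemma13:
  fixes E :: "'a \<Rightarrow> 'a \<Rightarrow> bool" and V :: "'a set" and c :: "'a \<Rightarrow> real"
    and a b :: real and X T' H :: "'a set" and g :: "'a \<Rightarrow> 'a \<Rightarrow> 'a"
    and l :: "'a \<Rightarrow> nat" and D :: "'a dtree"
  assumes tree: "is_tree E V"
    and cpos: "\<forall>v\<in>V. c v > 0"
    and a_pos: "0 < a" and ab: "a < b"
    and cb: "\<forall>v\<in>V. c v \<le> b" and b2a: "b \<le> 2 * a"
    and light: "\<exists>v\<in>V. c v \<le> a"
    and X: "valid_X E V c a X"
    and g: "valid_Z_choice E V c (Yset E V X) g"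
    and T': "T' \<in> components E (V - Zset E V (Yset E V X) g)"
    and H: "heavy_module E V c a H" and HT': "H \<inter> T' \<noteq> {}"
    and l: "optimal_ranking E (steiner E T' (H \<inter> T')) l"
    and D: "ranking_dtree E l (steiner E T' (H \<inter> T')) D"
  shows "dcost c D \<le> 2 * OPT E V c"
proof -
  have finV: "finite V" and neV: "V \<noteq> {}" using tree unfolding is_tree_def by auto
  have T'p: "T' \<subseteq> V" "connected_on E T'"
    using comp_props[OF T'] by auto
  have Hp: "H \<subseteq> V" "connected_on E H" "\<forall>v\<in>H. c v > a"
    using H unfolding heavy_module_def by auto
  define S where "S = H \<inter> T'"
  have SV: "S \<subseteq> V" using Hp(1) unfolding S_def by blast
  have Sc: "connected_on E S" unfolding S_def
    using tree_inter[OF tree Hp(1) T'p(1) Hp(2) T'p(2) HT'] .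
  have stS: "steiner E T' (H \<inter> T') = S"
    unfolding S_def by (rule steiner_self) (use Sc S_def in auto)
  have finS: "finite S" using finV SV finite_subset by blast
  have lS: "optimal_ranking E S l" using l stS by simp
  have DS: "ranking_dtree E l S D" using D stS by simp
  define k where "k = card (l ` S)"
  have vr: "vertex_ranking E S l" using lS unfolding optimal_ranking_def by blast
  have pathsD: "\<forall>p\<in>dpaths D. length p \<le> k \<and> set p \<subseteq> S"
    using ub_paths[OF vr finS DS order_refl Sc] unfolding k_def .
  have b0: "0 \<le> b" using a_pos ab by simp
  have ub: "dcost c D \<le> b * real k"
    unfolding dcost_def
  proof (subst Max_le_iff)
    show "finite ((\<lambda>p. sum_list (map c p)) ` dpaths D)" using dpaths_finite[of D] by simp
    show "(\<lambda>p. sum_list (map c p)) ` dpaths D \<noteq> {}" using dpaths_ne[of D] by simp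
    show "\<forall>x\<in>(\<lambda>p. sum_list (map c p)) ` dpaths D. x \<le> b * real k"
    proof
      fix x assume "x \<in> (\<lambda>p. sum_list (map c p)) ` dpaths D"
      then obtain p where p: "p \<in> dpaths D" "x = sum_list (map c p)" by blast
      have "\<forall>y\<in>set p. c y \<le> b" using pathsD p(1) SV cb by blast
      then have "x \<le> real (length p) * b" using sum_upper p(2) by blast
      also have "\<dots> \<le> real k * b" using pathsD p(1) b0 by (simp add: mult_right_mono)
      finally show "x \<le> b * real k" by (simp add: mult.commute)
    qed
  qed
  have lbD: "a * real k \<le> dcost c D'" if D': "is_dtree E V D'" for D'
  proof -
    obtain l' where l': "\<forall>v\<in>S \<inter> V. 1 \<le> l' v \<and> l' v \<le> hcount S D'"
      "\<forall>u\<in>S \<inter> V. \<forall>v\<in>S \<inter> V. u \<noteq> v \<and> l' u = l' v \<longrightarrow>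
         (\<exists>z\<in>path_interior E S u v \<inter> V. l' v < l' z)"
      using lb_rank[OF tree SV Sc D' order_refl] tree unfolding is_tree_def by blast
    have SVi: "S \<inter> V = S" using SV by blast
    have "vertex_ranking E S l'"
      unfolding vertex_ranking_def using l' SVi by fastforce
    then have "k \<le> card (l' ` S)" using lS unfolding optimal_ranking_def k_def by blast
    also have "\<dots> \<le> card {1..hcount S D'}"
      using l' SVi by (intro card_mono) auto
    also have "\<dots> = hcount S D'" by simp
    finally have kh: "k \<le> hcount S D'" .
    obtain p where p: "p \<in> dpaths D'" "length (filter (\<lambda>x. x \<in> S) p) = hcount S D'"
      using hcount_att by blast
    have pV: "set p \<subseteq> V" using dtree_paths_sub[OF D'] p(1) by blast
    have "a * real k \<le> a * real (hcount S D')" using kh a_pos by simp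
    also have "\<dots> \<le> sum_list (map c p)"
    proof -
      have "\<forall>x\<in>set p. 0 < c x" using pV cpos by blast
      moreover have "\<forall>x\<in>set p. x \<in> S \<longrightarrow> a \<le> c x" using Hp(3) unfolding S_def by force
      ultimately show ?thesis using sum_lower[of p c S a] p(2) by simp
    qed
    also have "\<dots> \<le> dcost c D'"
      unfolding dcost_def using p(1) dpaths_finite by (intro Max_ge) auto
    finally show ?thesis .
  qed
  have "{D. is_dtree E V D} \<noteq> {}" using dtree_exists[OF finV neV] by blast
  then have opt: "a * real k \<le> OPT E V c"
    unfolding OPT_def by (rule cINF_greatest) (use lbD in blast)
  have "dcost c D \<le> b * real k" by (rule ub)
  also have "\<dots> \<le> 2 * a * real k" using b2a by (simp add: mult_right_mono)
  also have "\<dots> \<le> 2 * OPT E V c" using opt by simp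
  finally show ?thesis .
qed

end
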